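(* Let $S$ be a set of $n\ge3$ points in the plane with the $L_1$-metric as underlying metric. The minimum, over all axis-aligned highway crosses of infinite speed, of the travel-time diameter of $S$ equals the width of a smallest enclosing cross of $S$.
   Context: An axis-aligned highway cross is the union $H$ of a horizontal line and a vertical line. One travels with speed $1$ off $H$ (distances in the $L_1$-metric $d$) and with infinite speed along $H$; hence the travel time is $t_H(p,q)=\min\{d(p,q),\, d(p,H)+d(q,H)\}$, where $d(x,H)$ is the $L_1$-distance from $x$ to $H$. The travel-time diameter of $S$ is $\max_{p,q\in S}t_H(p,q)$. An enclosing cross of $S$ is the union of a horizontal strip and a vertical strip of equal width $\omega$ (a strip being the closed region between two parallel lines, its width the distance between them) whose union contains $S$; $\omega$ is its width. A smallest enclosing cross is one of minimum width. *)

theory Defs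
  imports Complex_Main
begin

type_synonym pt = "real \<times> real"

definition l1 :: "pt \<Rightarrow> pt \<Rightarrow> real" where
  "l1 p q = \<bar>fst p - fst q\<bar> + \<bar>snd p - snd q\<bar>"

definition cross :: "real \<Rightarrow> real \<Rightarrow> pt set" where
  "cross a b = {p. fst p = a \<or> snd p = b}"

definition dist_set :: "pt \<Rightarrow> pt set \<Rightarrow> real" where
  "dist_set p H = (INF h\<in>H. l1 p h)"

definition travel_time :: "pt set \<Rightarrow> pt \<Rightarrow> pt \<Rightarrow> real" where
  "travel_time H p q = min (l1 p q) (dist_set p H + dist_set q H)"

definition travel_diam :: "pt set \<Rightarrow> pt set \<Rightarrow> real" where
  "travel_diam H S = Max {travel_time H p q | p q. p \<in> S \<and> q \<in> S}"

definition enclosing_cross :: "pt set \<Rightarrow> real \<Rightarrow> real \<Rightarrow> real \<Rightarrow> bool" where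
  "enclosing_cross S c e w \<longleftrightarrow> w \<ge> 0 \<and>
     S \<subseteq> {p. c \<le> snd p \<and> snd p \<le> c + w} \<union> {p. e \<le> fst p \<and> fst p \<le> e + w}"

end

theory Submission
  imports Defs
begin

lemma dist_cross: "dist_set p (cross a b) = min \<bar>fst p - a\<bar> \<bar>snd p - b\<bar>"
proof -
  have m: "min \<bar>fst p - a\<bar> \<bar>snd p - b\<bar> \<in> (\<lambda>h. l1 p h) ` cross a b"
  proof (cases "\<bar>fst p - a\<bar> \<le> \<bar>snd p - b\<bar>")
    case True
    then show ?thesis
      by (intro image_eqI[where x="(a, snd p)"]) (auto simp: l1_def cross_def)
  next
    case False
    then show ?thesis
      by (intro image_eqI[where x="(fst p, b)"]) (auto simp: l1_def cross_def)
  qed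
  have lb: "\<And>x. x \<in> (\<lambda>h. l1 p h) ` cross a b \<Longrightarrow> min \<bar>fst p - a\<bar> \<bar>snd p - b\<bar> \<le> x"
    by (auto simp: l1_def cross_def)
  show ?thesis unfolding dist_set_def by (rule cInf_eq_minimum[OF m lb])
qed

lemma tset_eq: "{travel_time H p q | p q. p \<in> S \<and> q \<in> S} = (\<lambda>(p,q). travel_time H p q) ` (S \<times> S)"
  by auto

lemma diam_ge:
  assumes "finite S" "p \<in> S" "q \<in> S"
  shows "travel_time H p q \<le> travel_diam H S"
proof -
  have "travel_time H p q \<in> (\<lambda>(p,q). travel_time H p q) ` (S \<times> S)" using assms by force
  moreover have "finite ((\<lambda>(p,q). travel_time H p q) ` (S \<times> S))" using assms by simp
  ultimately show ?thesis unfolding travel_diam_def tset_eq by (rule Max_ge[rotated])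
qed

lemma diam_le:
  assumes "finite S" "S \<noteq> {}" "\<And>p q. p \<in> S \<Longrightarrow> q \<in> S \<Longrightarrow> travel_time H p q \<le> D"
  shows "travel_diam H S \<le> D"
  unfolding travel_diam_def tset_eq
  using assms by (subst Max_le_iff) auto

lemma aux_min: "min (A::real) (B1 + B2) \<le> D \<Longrightarrow> B1 > D/2 \<Longrightarrow> B2 > D/2 \<Longrightarrow> A \<le> D"
  by (simp add: min_le_iff_disj)

lemma aux_abs: "\<bar>a - b\<bar> + (c::real) \<le> D \<Longrightarrow> c \<ge> 0 \<Longrightarrow> a - D \<le> b \<and> b - D \<le> a"
  by linarith

lemma core:
  fixes X Y :: "pt \<Rightarrow> real"
  assumes fin: "finite S" and D0: "D \<ge> 0"
    and P: "\<And>p q. p \<in> S \<Longrightarrow> q \<in> S \<Longrightarrow>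
          min (\<bar>X p - X q\<bar> + \<bar>Y p - Y q\<bar>) (min \<bar>X p\<bar> \<bar>Y p\<bar> + min \<bar>X q\<bar> \<bar>Y q\<bar>) \<le> D"
    and Q: "\<And>p. p \<in> S \<Longrightarrow> min \<bar>X p\<bar> \<bar>Y p\<bar> > D/2 \<Longrightarrow> X p > 0 \<and> Y p > 0"
  shows "\<exists>u t. \<forall>p\<in>S. (u \<le> X p \<and> X p \<le> u + D) \<or> (t \<le> Y p \<and> Y p \<le> t + D)"
proof -
  define Fx where "Fx = {p\<in>S. min \<bar>X p\<bar> \<bar>Y p\<bar> > D/2 \<and> X p \<le> Y p}"
  define Fy where "Fy = {p\<in>S. min \<bar>X p\<bar> \<bar>Y p\<bar> > D/2 \<and> Y p < X p}"
  have fFx: "finite Fx" and fFy: "finite Fy" using fin by (auto simp: Fx_def Fy_def)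
  define u where "u = (if Fx = {} then -D/2 else max (-D/2) (Max (X ` Fx) - D))"
  define t where "t = (if Fy = {} then -D/2 else max (-D/2) (Max (Y ` Fy) - D))"
  have u1: "u \<ge> -D/2" and t1: "t \<ge> -D/2" by (auto simp: u_def t_def)
  have u2: "\<And>f. f \<in> Fx \<Longrightarrow> X f \<le> u + D"
  proof -
    fix f assume "f \<in> Fx"
    then have "X f \<le> Max (X ` Fx)" using fFx by simp
    then show "X f \<le> u + D" using \<open>f \<in> Fx\<close> by (auto simp: u_def)
  qed
  have t2: "\<And>f. f \<in> Fy \<Longrightarrow> Y f \<le> t + D"
  proof -
    fix f assume "f \<in> Fy"
    then have "Y f \<le> Max (Y ` Fy)" using fFy by simp
    then show "Y f \<le> t + D" using \<open>f \<in> Fy\<close> by (auto simp: t_def)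
  qed
  have u3: "Fx \<noteq> {} \<Longrightarrow> \<exists>f\<in>Fx. u = max (-D/2) (X f - D)"
  proof -
    assume "Fx \<noteq> {}"
    then have "Max (X ` Fx) \<in> X ` Fx" using fFx by auto
    then show ?thesis using \<open>Fx \<noteq> {}\<close> by (auto simp: u_def)
  qed
  have t3: "Fy \<noteq> {} \<Longrightarrow> \<exists>f\<in>Fy. t = max (-D/2) (Y f - D)"
  proof -
    assume "Fy \<noteq> {}"
    then have "Max (Y ` Fy) \<in> Y ` Fy" using fFy by auto
    then show ?thesis using \<open>Fy \<noteq> {}\<close> by (auto simp: t_def)
  qed
  have "\<forall>p\<in>S. (u \<le> X p \<and> X p \<le> u + D) \<or> (t \<le> Y p \<and> Y p \<le> t + D)"
  proof
    fix p assume pS: "p \<in> S"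
    show "(u \<le> X p \<and> X p \<le> u + D) \<or> (t \<le> Y p \<and> Y p \<le> t + D)"
    proof (cases "min \<bar>X p\<bar> \<bar>Y p\<bar> > D/2")
      case big: True
      with Q[OF pS] have pos: "X p > 0" "Y p > 0" by auto
      show ?thesis
      proof (cases "X p \<le> Y p")
        case True
        then have pF: "p \<in> Fx" using pS big by (auto simp: Fx_def)
        then obtain f where f: "f \<in> Fx" "u = max (-D/2) (X f - D)" using u3 by blast
        have fS: "f \<in> S" and fb: "min \<bar>X f\<bar> \<bar>Y f\<bar> > D/2" using f by (auto simp: Fx_def)
        have "min (\<bar>X f - X p\<bar> + \<bar>Y f - Y p\<bar>) (min \<bar>X f\<bar> \<bar>Y f\<bar> + min \<bar>X p\<bar> \<bar>Y p\<bar>) \<le> D"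
          using P[OF fS pS] .
        then have "\<bar>X f - X p\<bar> + \<bar>Y f - Y p\<bar> \<le> D" using fb big by (rule aux_min)
        then have "X f - D \<le> X p" using aux_abs[OF _ abs_ge_zero] by blast
        then have "u \<le> X p" using f(2) pos D0 by linarith
        then show ?thesis using u2[OF pF] by blast
      next
        case False
        then have pF: "p \<in> Fy" using pS big by (auto simp: Fy_def)
        then obtain f where f: "f \<in> Fy" "t = max (-D/2) (Y f - D)" using t3 by blast
        have fS: "f \<in> S" and fb: "min \<bar>X f\<bar> \<bar>Y f\<bar> > D/2" using f by (auto simp: Fy_def)
        have "min (\<bar>X f - X p\<bar> + \<bar>Y f - Y p\<bar>) (min \<bar>X f\<bar> \<bar>Y f\<bar> + min \<bar>X p\<bar> \<bar>Y p\<bar>) \<le> D"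
          using P[OF fS pS] .
        then have "\<bar>X f - X p\<bar> + \<bar>Y f - Y p\<bar> \<le> D" using fb big by (rule aux_min)
        then have "\<bar>Y f - Y p\<bar> + \<bar>X f - X p\<bar> \<le> D" by (simp add: add.commute)
        then have "Y f - D \<le> Y p" using aux_abs[OF _ abs_ge_zero] by blast
        then have "t \<le> Y p" using f(2) pos D0 by linarith
        then show ?thesis using t2[OF pF] by blast
      qed
    next
      case small: False
      show ?thesis
      proof (cases "\<bar>X p\<bar> \<le> \<bar>Y p\<bar>")
        case True
        then have xp: "\<bar>X p\<bar> \<le> D/2" using small by linarith
        have "u \<le> X p"
        proof (cases "Fx = {}")
          case True then show ?thesis using xp by (simp add: u_def)
        next
          case False
          then obtain f where f: "f \<in> Fx" "u = max (-D/2) (X f - D)" using u3 by blast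
          have fS: "f \<in> S" and fb: "min \<bar>X f\<bar> \<bar>Y f\<bar> > D/2" and fxy: "X f \<le> Y f"
            using f by (auto simp: Fx_def)
          have fpos: "X f > 0" "Y f > 0" using Q[OF fS fb] by auto
          have "min (\<bar>X f - X p\<bar> + \<bar>Y f - Y p\<bar>) (min \<bar>X f\<bar> \<bar>Y f\<bar> + min \<bar>X p\<bar> \<bar>Y p\<bar>) \<le> D"
            using P[OF fS pS] .
          moreover have "min \<bar>X f\<bar> \<bar>Y f\<bar> = X f" using fpos fxy by simp
          moreover have "min \<bar>X p\<bar> \<bar>Y p\<bar> = \<bar>X p\<bar>" using True by simp
          ultimately have "\<bar>X f - X p\<bar> + \<bar>Y f - Y p\<bar> \<le> D \<or> X f + \<bar>X p\<bar> \<le> D" by (metis min_le_iff_disj)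
          then have "X f - D \<le> X p"
          proof
            assume "\<bar>X f - X p\<bar> + \<bar>Y f - Y p\<bar> \<le> D" then show ?thesis using aux_abs[OF _ abs_ge_zero] by blast
          next
            assume "X f + \<bar>X p\<bar> \<le> D" then show ?thesis by (simp add: abs_le_iff)
          qed
          then show ?thesis using f(2) xp by linarith
        qed
        moreover have "X p \<le> u + D" using xp u1 by linarith
        ultimately show ?thesis by blast
      next
        case False
        then have yp: "\<bar>Y p\<bar> \<le> D/2" using small by linarith
        have "t \<le> Y p"
        proof (cases "Fy = {}")
          case True then show ?thesis using yp by (simp add: t_def)
        next
          case False
          then obtain f where f: "f \<in> Fy" "t = max (-D/2) (Y f - D)" using t3 by blast
          have fS: "f \<in> S" and fb: "min \<bar>X f\<bar> \<bar>Y f\<bar> > D/2" and fxy: "Y f < X f"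
            using f by (auto simp: Fy_def)
          have fpos: "X f > 0" "Y f > 0" using Q[OF fS fb] by auto
          have "min (\<bar>X f - X p\<bar> + \<bar>Y f - Y p\<bar>) (min \<bar>X f\<bar> \<bar>Y f\<bar> + min \<bar>X p\<bar> \<bar>Y p\<bar>) \<le> D"
            using P[OF fS pS] .
          moreover have "min \<bar>X f\<bar> \<bar>Y f\<bar> = Y f" using fpos fxy by simp
          moreover have "min \<bar>X p\<bar> \<bar>Y p\<bar> = \<bar>Y p\<bar>" using \<open>\<not> \<bar>X p\<bar> \<le> \<bar>Y p\<bar>\<close> by simp
          ultimately have "\<bar>X f - X p\<bar> + \<bar>Y f - Y p\<bar> \<le> D \<or> Y f + \<bar>Y p\<bar> \<le> D" by (metis min_le_iff_disj)
          then have "Y f - D \<le> Y p"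
          proof
            assume "\<bar>X f - X p\<bar> + \<bar>Y f - Y p\<bar> \<le> D"
            then have "\<bar>Y f - Y p\<bar> + \<bar>X f - X p\<bar> \<le> D" by simp
            then show ?thesis using aux_abs[OF _ abs_ge_zero] by blast
          next
            assume "Y f + \<bar>Y p\<bar> \<le> D" then show ?thesis by (simp add: abs_le_iff)
          qed
          then show ?thesis using f(2) yp by linarith
        qed
        moreover have "Y p \<le> t + D" using yp t1 by linarith
        ultimately show ?thesis by blast
      qed
    qed
  qed
  then show ?thesis by blast
qed

lemma tt_self: "travel_time H p p = 0 \<or> travel_time H p p \<le> 0"
  by (simp add: travel_time_def l1_def)

lemma sig_int:
  assumes "\<sigma> = 1 \<or> \<sigma> = -1" "u \<le> \<sigma>*(x-a) \<and> \<sigma>*(x-a) \<le> u+(D::real)"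
  shows "(if \<sigma>=1 then a+u else a-u-D) \<le> x \<and> x \<le> (if \<sigma>=1 then a+u else a-u-D) + D"
  using assms by auto

lemma sig_abs: "\<sigma> = 1 \<or> \<sigma> = -1 \<Longrightarrow> \<bar>\<sigma> * (x::real)\<bar> = \<bar>x\<bar>"
  by auto

lemma sig_diff: "\<sigma> = 1 \<or> \<sigma> = -1 \<Longrightarrow> \<bar>\<sigma> * ((x::real) - a) - \<sigma> * (y - a)\<bar> = \<bar>x - y\<bar>"
  by auto

lemma sign_choice:
  assumes "\<bar>z::real\<bar> > 0"
  obtains \<sigma> where "\<sigma> = 1 \<or> \<sigma> = -1" "\<sigma> * z > 0"
proof (cases "z > 0")
  case True then show ?thesis using that[of 1] by auto
next
  case False then show ?thesis using that[of "-1"] assms by auto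
qed

lemma sign_same:
  assumes "\<sigma> = 1 \<or> \<sigma> = -1" "\<sigma> * (x - a) > 0" "\<bar>x - a\<bar> > (D::real)/2" "\<bar>y - a\<bar> > D/2"
    "\<not> \<sigma> * (y - a) > 0"
  shows "\<bar>x - y\<bar> > D"
  using assms by auto

lemma lower:
  assumes fin: "finite S" and ne: "S \<noteq> {}"
  shows "\<exists>c e. enclosing_cross S c e (travel_diam (cross a b) S)"
proof -
  define D where "D = travel_diam (cross a b) S"
  define dd where "dd p = min \<bar>fst p - a\<bar> \<bar>snd p - b\<bar>" for p :: pt
  obtain p0 where p0: "p0 \<in> S" using ne by blast
  have "travel_time (cross a b) p0 p0 \<le> D" unfolding D_def by (rule diam_ge[OF fin p0 p0])
  moreover have "travel_time (cross a b) p0 p0 = 0"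
    by (simp add: travel_time_def l1_def dist_cross)
  ultimately have D0: "D \<ge> 0" by simp
  have P0: "min (l1 p q) (dd p + dd q) \<le> D" if "p \<in> S" "q \<in> S" for p q
    using diam_ge[OF fin that, of "cross a b"] unfolding D_def travel_time_def dist_cross dd_def .
  have l1_ge: "\<bar>fst p - fst q\<bar> \<le> l1 p q" "\<bar>snd p - snd q\<bar> \<le> l1 p q" for p q
    by (auto simp: l1_def)
  obtain \<sigma> \<tau> where st: "\<sigma> = 1 \<or> \<sigma> = -1" "\<tau> = 1 \<or> \<tau> = -1"
    and Q0: "\<And>p. p \<in> S \<Longrightarrow> dd p > D/2 \<Longrightarrow> \<sigma> * (fst p - a) > 0 \<and> \<tau> * (snd p - b) > 0"
  proof (cases "\<exists>f\<in>S. dd f > D/2")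
    case True
    then obtain f where f: "f \<in> S" "dd f > D/2" by blast
    have fx: "\<bar>fst f - a\<bar> > D/2" and fy: "\<bar>snd f - b\<bar> > D/2" using f(2) by (auto simp: dd_def)
    have "\<bar>fst f - a\<bar> > 0" using fx D0 by linarith
    then obtain \<sigma> where s: "\<sigma> = 1 \<or> \<sigma> = -1" "\<sigma> * (fst f - a) > 0"
      by (rule sign_choice)
    have "\<bar>snd f - b\<bar> > 0" using fy D0 by linarith
    then obtain \<tau> where t: "\<tau> = 1 \<or> \<tau> = -1" "\<tau> * (snd f - b) > 0"
      by (rule sign_choice)
    show ?thesis
    proof (rule that[OF s(1) t(1)])
      fix p assume pS: "p \<in> S" and pd: "dd p > D/2"
      have px: "\<bar>fst p - a\<bar> > D/2" and py: "\<bar>snd p - b\<bar> > D/2" using pd by (auto simp: dd_def)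
      have sum: "dd f + dd p > D" using f(2) pd by linarith
      have m: "min (l1 f p) (dd f + dd p) \<le> D" using P0[OF f(1) pS] .
      have "l1 f p \<le> D" using m sum by (simp add: min_le_iff_disj)
      show "\<sigma> * (fst p - a) > 0 \<and> \<tau> * (snd p - b) > 0"
      proof (rule conjI; rule ccontr)
        assume "\<not> \<sigma> * (fst p - a) > 0"
        then have "\<bar>fst f - fst p\<bar> > D" using sign_same[OF s(1) s(2) fx px] by blast
        then show False using l1_ge(1)[of f p] \<open>l1 f p \<le> D\<close> by linarith
      next
        assume "\<not> \<tau> * (snd p - b) > 0"
        then have "\<bar>snd f - snd p\<bar> > D" using sign_same[OF t(1) t(2) fy py] by blast
        then show False using l1_ge(2)[of f p] \<open>l1 f p \<le> D\<close> by linarith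
      qed
    qed
  next
    case False
    then show ?thesis using that[of 1 1] by auto
  qed
  define X where "X p = \<sigma> * (fst p - a)" for p :: pt
  define Y where "Y p = \<tau> * (snd p - b)" for p :: pt
  have aX: "\<bar>X p\<bar> = \<bar>fst p - a\<bar>" for p unfolding X_def using sig_abs[OF st(1)] .
  have aY: "\<bar>Y p\<bar> = \<bar>snd p - b\<bar>" for p unfolding Y_def using sig_abs[OF st(2)] .
  have dX: "\<bar>X p - X q\<bar> = \<bar>fst p - fst q\<bar>" for p q unfolding X_def using sig_diff[OF st(1)] .
  have dY: "\<bar>Y p - Y q\<bar> = \<bar>snd p - snd q\<bar>" for p q unfolding Y_def using sig_diff[OF st(2)] .
  have "\<exists>u t. \<forall>p\<in>S. (u \<le> X p \<and> X p \<le> u + D) \<or> (t \<le> Y p \<and> Y p \<le> t + D)"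
  proof (rule core[OF fin D0])
    fix p q assume "p \<in> S" "q \<in> S"
    then have "min (l1 p q) (dd p + dd q) \<le> D" by (rule P0)
    then show "min (\<bar>X p - X q\<bar> + \<bar>Y p - Y q\<bar>) (min \<bar>X p\<bar> \<bar>Y p\<bar> + min \<bar>X q\<bar> \<bar>Y q\<bar>) \<le> D"
      unfolding aX aY dX dY l1_def dd_def .
  next
    fix p assume pS: "p \<in> S" and m: "min \<bar>X p\<bar> \<bar>Y p\<bar> > D/2"
    have "dd p > D/2" using m unfolding aX aY dd_def .
    then show "X p > 0 \<and> Y p > 0" using Q0[OF pS] unfolding X_def Y_def by blast
  qed
  then obtain u t where ut: "\<forall>p\<in>S. (u \<le> X p \<and> X p \<le> u + D) \<or> (t \<le> Y p \<and> Y p \<le> t + D)" by blast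
  define e where "e = (if \<sigma>=1 then a+u else a-u-D)"
  define c where "c = (if \<tau>=1 then b+t else b-t-D)"
  have "enclosing_cross S c e D"
    unfolding enclosing_cross_def
  proof (intro conjI D0 subsetI)
    fix p assume "p \<in> S"
    then have "(u \<le> X p \<and> X p \<le> u + D) \<or> (t \<le> Y p \<and> Y p \<le> t + D)" using ut by blast
    then show "p \<in> {p. c \<le> snd p \<and> snd p \<le> c + D} \<union> {p. e \<le> fst p \<and> fst p \<le> e + D}"
    proof
      assume "u \<le> X p \<and> X p \<le> u + D"
      then have "e \<le> fst p \<and> fst p \<le> e + D" unfolding e_def X_def by (rule sig_int[OF st(1)])
      then show ?thesis by blast
    next
      assume "t \<le> Y p \<and> Y p \<le> t + D"
      then have "c \<le> snd p \<and> snd p \<le> c + D" unfolding c_def Y_def by (rule sig_int[OF st(2)])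
      then show ?thesis by blast
    qed
  qed
  then show ?thesis unfolding D_def by blast
qed

lemma upper:
  assumes fin: "finite S" and ne: "S \<noteq> {}" and ec: "enclosing_cross S c e w"
  shows "travel_diam (cross (e + w/2) (c + w/2)) S \<le> w"
proof (rule diam_le[OF fin ne])
  have dd: "dist_set p (cross (e + w/2) (c + w/2)) \<le> w/2" if "p \<in> S" for p
  proof -
    have "(c \<le> snd p \<and> snd p \<le> c + w) \<or> (e \<le> fst p \<and> fst p \<le> e + w)"
      using ec that unfolding enclosing_cross_def by blast
    then show ?thesis unfolding dist_cross
    proof (elim disjE)
      assume "c \<le> snd p \<and> snd p \<le> c + w"
      then have "\<bar>snd p - (c + w/2)\<bar> \<le> w/2" by linarith
      then show "min \<bar>fst p - (e + w/2)\<bar> \<bar>snd p - (c + w/2)\<bar> \<le> w/2" by (rule min.coboundedI2)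
    next
      assume "e \<le> fst p \<and> fst p \<le> e + w"
      then have "\<bar>fst p - (e + w/2)\<bar> \<le> w/2" by linarith
      then show "min \<bar>fst p - (e + w/2)\<bar> \<bar>snd p - (c + w/2)\<bar> \<le> w/2" by (rule min.coboundedI1)
    qed
  qed
  fix p q assume "p \<in> S" "q \<in> S"
  then show "travel_time (cross (e + w/2) (c + w/2)) p q \<le> w"
    using dd[of p] dd[of q] unfolding travel_time_def by linarith
qed

definition span :: "real set \<Rightarrow> real" where
  "span A = (if A = {} then 0 else Max A - Min A)"

definition lo :: "real set \<Rightarrow> real" where
  "lo A = (if A = {} then 0 else Min A)"

lemma span_in:
  assumes "finite A" "A \<noteq> {}" "x \<in> A"
  shows "lo A \<le> x \<and> x \<le> lo A + span A"
  using assms by (auto simp: lo_def span_def)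

lemma span_le:
  assumes "finite A" "\<And>x. x \<in> A \<Longrightarrow> l \<le> x \<and> x \<le> l + (w::real)" "w \<ge> 0"
  shows "span A \<le> w"
proof (cases "A = {}")
  case False
  have "Max A \<in> A" "Min A \<in> A" using assms(1) False by auto
  then have "l \<le> Min A" "Max A \<le> l + w" using assms(2) by auto
  then show ?thesis using False by (simp add: span_def)
qed (use assms in \<open>simp add: span_def\<close>)

lemma span_nonneg:
  assumes "finite A" shows "span A \<ge> 0"
proof (cases "A = {}")
  case False
  then obtain x where "x \<in> A" by blast
  then have "Min A \<le> x" "x \<le> Max A" using assms by auto
  then show ?thesis using False by (simp add: span_def)
qed (simp add: span_def)

lemma span_W:
  assumes "finite A" "A \<noteq> {}"
  shows "\<exists>x\<in>A. \<exists>y\<in>A. span A = \<bar>x - y\<bar>"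
proof -
  have "Max A \<in> A" "Min A \<in> A" using assms by auto
  moreover have "Min A \<le> Max A" using assms by simp
  ultimately show ?thesis unfolding span_def using assms(2)
    by (intro bexI[of _ "Max A"] bexI[of _ "Min A"]) auto
qed

definition Wset :: "pt set \<Rightarrow> real set" where
  "Wset S = (\<lambda>(p,q). \<bar>fst p - fst q\<bar>) ` (S \<times> S) \<union> (\<lambda>(p,q). \<bar>snd p - snd q\<bar>) ` (S \<times> S)"

lemma reduce:
  assumes fin: "finite S" and ne: "S \<noteq> {}" and ec: "enclosing_cross S c e w"
  shows "\<exists>c' e' w'. enclosing_cross S c' e' w' \<and> w' \<le> w \<and> w' \<in> Wset S"
proof -
  define A where "A = {p\<in>S. c \<le> snd p \<and> snd p \<le> c + w}"
  define B where "B = S - A"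
  have w0: "w \<ge> 0" using ec by (simp add: enclosing_cross_def)
  have fA: "finite (snd ` A)" and fB: "finite (fst ` B)" using fin by (auto simp: A_def B_def)
  have Bv: "e \<le> fst p \<and> fst p \<le> e + w" if "p \<in> B" for p
    using ec that unfolding enclosing_cross_def A_def B_def by blast
  define wA where "wA = span (snd ` A)"
  define wB where "wB = span (fst ` B)"
  have wA_le: "wA \<le> w" unfolding wA_def
    by (rule span_le[OF fA _ w0, of c]) (auto simp: A_def)
  have wB_le: "wB \<le> w" unfolding wB_def
    by (rule span_le[OF fB _ w0, of e]) (use Bv in auto)
  obtain p0 where p0: "p0 \<in> S" using ne by blast
  have zW: "0 \<in> Wset S" unfolding Wset_def using p0 by force
  have wAW: "wA \<in> Wset S"
  proof (cases "A = {}")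
    case True then show ?thesis using zW by (simp add: wA_def span_def)
  next
    case False
    then obtain x y where "x \<in> snd ` A" "y \<in> snd ` A" "wA = \<bar>x - y\<bar>"
      using span_W[OF fA] unfolding wA_def by blast
    then show ?thesis unfolding Wset_def A_def by force
  qed
  have wBW: "wB \<in> Wset S"
  proof (cases "B = {}")
    case True then show ?thesis using zW by (simp add: wB_def span_def)
  next
    case False
    then obtain x y where "x \<in> fst ` B" "y \<in> fst ` B" "wB = \<bar>x - y\<bar>"
      using span_W[OF fB] unfolding wB_def by blast
    then show ?thesis unfolding Wset_def B_def by force
  qed
  define w' where "w' = max wA wB"
  have wA0: "wA \<ge> 0" unfolding wA_def using fA by (rule span_nonneg)
  have "enclosing_cross S (lo (snd ` A)) (lo (fst ` B)) w'"
    unfolding enclosing_cross_def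
  proof (intro conjI subsetI)
    show "w' \<ge> 0" using wA0 by (simp add: w'_def)
    fix p assume pS: "p \<in> S"
    show "p \<in> {p. lo (snd ` A) \<le> snd p \<and> snd p \<le> lo (snd ` A) + w'} \<union> {p. lo (fst ` B) \<le> fst p \<and> fst p \<le> lo (fst ` B) + w'}"
    proof (cases "p \<in> A")
      case True
      then have "lo (snd ` A) \<le> snd p \<and> snd p \<le> lo (snd ` A) + wA"
        using span_in[OF fA, of "snd p"] unfolding wA_def by blast
      then show ?thesis unfolding w'_def by auto
    next
      case False
      then have "p \<in> B" using pS by (simp add: B_def)
      then have "lo (fst ` B) \<le> fst p \<and> fst p \<le> lo (fst ` B) + wB"
        using span_in[OF fB, of "fst p"] unfolding wB_def by blast
      then show ?thesis unfolding w'_def by auto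
    qed
  qed
  moreover have "w' \<le> w" using wA_le wB_le by (simp add: w'_def)
  moreover have "w' \<in> Wset S" using wAW wBW by (simp add: w'_def max_def)
  ultimately show ?thesis by blast
qed

lemma exists_min:
  assumes fin: "finite S" and ne: "S \<noteq> {}"
  shows "\<exists>w c e. enclosing_cross S c e w \<and> (\<forall>c' e' w'. enclosing_cross S c' e' w' \<longrightarrow> w \<le> w')"
proof -
  define M where "M = {w \<in> Wset S. \<exists>c e. enclosing_cross S c e w}"
  have fM: "finite M" unfolding M_def Wset_def using fin by auto
  define c0 where "c0 = lo (snd ` S)"
  define w0 where "w0 = span (snd ` S)"
  have fS: "finite (snd ` S)" using fin by simp
  have "enclosing_cross S c0 0 w0" unfolding enclosing_cross_def
  proof (intro conjI subsetI)
    show "0 \<le> w0" unfolding w0_def using fS by (rule span_nonneg)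
    fix p assume "p \<in> S"
    then have "c0 \<le> snd p \<and> snd p \<le> c0 + w0" unfolding c0_def w0_def
      using span_in[OF fS] ne by blast
    then show "p \<in> {p. c0 \<le> snd p \<and> snd p \<le> c0 + w0} \<union> {p. 0 \<le> fst p \<and> fst p \<le> 0 + w0}" by blast
  qed
  then obtain c' e' w' where "enclosing_cross S c' e' w'" "w' \<in> Wset S"
    using reduce[OF fin ne] by blast
  then have neM: "M \<noteq> {}" unfolding M_def by blast
  have "Min M \<in> M" using fM neM by simp
  then obtain c e where ce: "enclosing_cross S c e (Min M)" unfolding M_def by blast
  have "Min M \<le> w'" if ec1: "enclosing_cross S c' e' w'" for c' e' w'
  proof -
    obtain c'' e'' w'' where "enclosing_cross S c'' e'' w''" "w'' \<le> w'" "w'' \<in> Wset S"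
      using reduce[OF fin ne ec1] by blast
    then have "w'' \<in> M" unfolding M_def by blast
    then have "Min M \<le> w''" using fM by simp
    then show ?thesis using \<open>w'' \<le> w'\<close> by linarith
  qed
  then show ?thesis using ce by blast
qed

theorem lemma2:
  fixes S :: "pt set"
  assumes "finite S" and "card S \<ge> 3"
  shows "\<exists>\<omega>. (\<exists>c e. enclosing_cross S c e \<omega> \<and>
                   (\<forall>c' e' \<omega>'. enclosing_cross S c' e' \<omega>' \<longrightarrow> \<omega> \<le> \<omega>'))
           \<and> (\<exists>a b. travel_diam (cross a b) S = \<omega>)
           \<and> (\<forall>a b. \<omega> \<le> travel_diam (cross a b) S)"
proof -
  have ne: "S \<noteq> {}" using assms(2) by auto
  obtain w c e where ce: "enclosing_cross S c e w"
    and mn: "\<forall>c' e' w'. enclosing_cross S c' e' w' \<longrightarrow> w \<le> w'"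
    using exists_min[OF assms(1) ne] by blast
  have lb: "w \<le> travel_diam (cross a b) S" for a b
    using lower[OF assms(1) ne, of a b] mn by blast
  have "travel_diam (cross (e + w/2) (c + w/2)) S = w"
    using upper[OF assms(1) ne ce] lb[of "e + w/2" "c + w/2"] by linarith
  then show ?thesis using ce mn lb by blast
qed

end
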